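(* Let $s,q\in\mathbb N$ and $\epsilon\in(0,1)$. Let $\xi$ be a detailing of a distribution $\mu$ over $\{0,1\}^n$ with respect to a finite set $A$, with weight distribution $\eta=\xi|_2$ and type distribution $\Lambda$. If $\xi$ is $\left(\frac{\epsilon}{3(s+1)},q\right)$-good and $n\ge\frac{6q^2(s+1)}{\epsilon}$, then $d_{TV}(\mathcal{D}_{sim}(\eta,\Lambda),\mathcal{D}^{s,q}_{test}(\mu))\le\epsilon$.
   Context: A detailing of $\mu$ with respect to a finite set $A$ is a distribution $\xi$ over $\{0,1\}^n\times A$ whose marginal on $\{0,1\}^n$ is $\mu$; its weight distribution is the marginal $\xi|_2$ on $A$, and for $a$ with $\xi|_2(a)>0$, $\xi|_1^{2:a}$ denotes the distribution of the first coordinate conditioned on the second being $a$. The type of index $i\in[n]$ is $t_i\in[0,1]^A$ with $t_i(a)=\Pr_{x\sim\xi|_1^{2:a}}[x_i=1]$ if $\xi|_2(a)>0$ and $t_i(a)=0$ otherwise; the type distribution $\Lambda$ is the distribution of $t_{\mathbf i}$ for $\mathbf i$ uniform in $[n]$. For a distribution $\nu$ over $\{0,1\}^n$, a $q$-tuple $(j_1,\dots,j_q)$ of distinct indices is $\epsilon$-independent with respect to $\nu$ if $d_{TV}(\nu|_{\{j_1,\dots,j_q\}},\prod_{\ell=1}^q\nu|_{j_\ell})\le\epsilon$ (projection vs. product of one-coordinate marginals); $\nu$ is $(\epsilon,q)$-good if at least a $1-\epsilon$ fraction of the $q$-tuples of distinct indices are $\epsilon$-independent w.r.t. $\nu$;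 the detailing $\xi$ is $(\epsilon,q)$-good if there is $J\subseteq A$ with $\xi|_2(J)\ge1-\epsilon$ such that $\xi|_1^{2:a}$ is $(\epsilon,q)$-good for every $a\in J$. $\mathcal{D}_{sim}(\eta,\Lambda)$ is the distribution on $\{0,1\}^{s\times q}$ of the matrix $M$ obtained by drawing $t_1,\dots,t_q\sim\Lambda$ and $a_1,\dots,a_s\sim\eta$ independently, and then each $M_{i,j}\sim\mathrm{Ber}(t_j(a_i))$ independently. $\mathcal{D}^{s,q}_{test}(\mu)$ is the distribution of the matrix $M_{i,k}=x^i_{j_k}$ where $x^1,\dots,x^s\sim\mu$ independently and $j_1,\dots,j_q$ are independent uniform elements of $[n]$. *)

theory Defs
  imports "HOL-Probability.Probability"
begin

text \<open>Vectors in {0,1}^n are represented as functions nat => bool that are False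
  outside [n] = {0..<n}. Matrices in {0,1}^{s x q} as functions on nat x nat,
  False outside {0..<s} x {0..<q}.\<close>

definition dTV :: "'b pmf \<Rightarrow> 'b pmf \<Rightarrow> real" where
  "dTV p r = (SUP S. \<bar>measure_pmf.prob p S - measure_pmf.prob r S\<bar>)"

definition cube :: "nat \<Rightarrow> (nat \<Rightarrow> bool) set" where
  "cube n = {x. \<forall>i\<ge>n. \<not> x i}"

definition is_detailing :: "nat \<Rightarrow> (nat \<Rightarrow> bool) pmf \<Rightarrow> 'a set \<Rightarrow> ((nat \<Rightarrow> bool) \<times> 'a) pmf \<Rightarrow> bool" where
  "is_detailing n \<mu> A \<xi> \<longleftrightarrow> finite A \<and> set_pmf \<mu> \<subseteq> cube n \<and>
     set_pmf \<xi> \<subseteq> cube n \<times> A \<and> map_pmf fst \<xi> = \<mu>"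

definition weight_dist :: "((nat \<Rightarrow> bool) \<times> 'a) pmf \<Rightarrow> 'a pmf" where
  "weight_dist \<xi> = map_pmf snd \<xi>"

text \<open>first coordinate conditioned on second = a (meaningful when the weight of a is positive)\<close>
definition cond_first :: "((nat \<Rightarrow> bool) \<times> 'a) pmf \<Rightarrow> 'a \<Rightarrow> (nat \<Rightarrow> bool) pmf" where
  "cond_first \<xi> a = map_pmf fst (cond_pmf \<xi> {z. snd z = a})"

definition type_of :: "((nat \<Rightarrow> bool) \<times> 'a) pmf \<Rightarrow> nat \<Rightarrow> 'a \<Rightarrow> real" where
  "type_of \<xi> i a = (if pmf (weight_dist \<xi>) a > 0
     then measure_pmf.prob (cond_first \<xi> a) {x. x i} else 0)"

definition type_dist :: "nat \<Rightarrow> ((nat \<Rightarrow> bool) \<times> 'a) pmf \<Rightarrow> ('a \<Rightarrow> real) pmf" where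
  "type_dist n \<xi> = map_pmf (type_of \<xi>) (pmf_of_set {..<n})"

definition proj_pmf :: "nat set \<Rightarrow> (nat \<Rightarrow> bool) pmf \<Rightarrow> (nat \<Rightarrow> bool) pmf" where
  "proj_pmf J \<nu> = map_pmf (\<lambda>x i. if i \<in> J then x i else False) \<nu>"

definition prod_marginals :: "nat set \<Rightarrow> (nat \<Rightarrow> bool) pmf \<Rightarrow> (nat \<Rightarrow> bool) pmf" where
  "prod_marginals J \<nu> = Pi_pmf J False (\<lambda>j. map_pmf (\<lambda>x. x j) \<nu>)"

definition eps_independent :: "real \<Rightarrow> (nat \<Rightarrow> bool) pmf \<Rightarrow> nat list \<Rightarrow> bool" where
  "eps_independent \<epsilon> \<nu> js \<longleftrightarrow> dTV (proj_pmf (set js) \<nu>) (prod_marginals (set js) \<nu>) \<le> \<epsilon>"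

definition tuples :: "nat \<Rightarrow> nat \<Rightarrow> nat list set" where
  "tuples n q = {js. length js = q \<and> distinct js \<and> set js \<subseteq> {..<n}}"

definition good_dist :: "nat \<Rightarrow> real \<Rightarrow> nat \<Rightarrow> (nat \<Rightarrow> bool) pmf \<Rightarrow> bool" where
  "good_dist n \<epsilon> q \<nu> \<longleftrightarrow>
     real (card {js \<in> tuples n q. eps_independent \<epsilon> \<nu> js}) \<ge> (1 - \<epsilon>) * real (card (tuples n q))"

definition good_detailing :: "nat \<Rightarrow> real \<Rightarrow> nat \<Rightarrow> 'a set \<Rightarrow> ((nat \<Rightarrow> bool) \<times> 'a) pmf \<Rightarrow> bool" where
  "good_detailing n \<epsilon> q A \<xi> \<longleftrightarrow>
     (\<exists>J \<subseteq> A. measure_pmf.prob (weight_dist \<xi>) J \<ge> 1 - \<epsilon> \<and>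
        (\<forall>a\<in>J. pmf (weight_dist \<xi>) a > 0 \<and> good_dist n \<epsilon> q (cond_first \<xi> a)))"

definition D_sim :: "nat \<Rightarrow> nat \<Rightarrow> 'a pmf \<Rightarrow> ('a \<Rightarrow> real) pmf \<Rightarrow> (nat \<times> nat \<Rightarrow> bool) pmf" where
  "D_sim s q \<eta> \<Lambda> =
     bind_pmf (Pi_pmf {..<q} (\<lambda>_. 0) (\<lambda>_. \<Lambda>)) (\<lambda>t.
     bind_pmf (Pi_pmf {..<s} undefined (\<lambda>_. \<eta>)) (\<lambda>a.
       Pi_pmf ({..<s} \<times> {..<q}) False (\<lambda>(i, j). bernoulli_pmf (t j (a i)))))"

definition D_test :: "nat \<Rightarrow> nat \<Rightarrow> nat \<Rightarrow> (nat \<Rightarrow> bool) pmf \<Rightarrow> (nat \<times> nat \<Rightarrow> bool) pmf" where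
  "D_test n s q \<mu> =
     bind_pmf (Pi_pmf {..<s} (\<lambda>_. False) (\<lambda>_. \<mu>)) (\<lambda>x.
     bind_pmf (Pi_pmf {..<q} 0 (\<lambda>_. pmf_of_set {..<n})) (\<lambda>j.
       return_pmf (\<lambda>(i, k). if i < s \<and> k < q then x i (j k) else False)))"

end

theory Submission
  imports Defs
begin

lemma prob_bind_pmf:
  "measure_pmf.prob (bind_pmf p f) S = (\<integral>x. measure_pmf.prob (f x) S \<partial>p)"
  unfolding measure_pmf_bind
  by (rule measure_pmf.measure_bind[where N="count_space UNIV"])
     (auto intro: measurable_measure_pmf simp: measure_pmf_in_subprob_algebra)

lemma abs_prob_diff_le1: "\<bar>measure_pmf.prob p S - measure_pmf.prob r S\<bar> \<le> 1"
proof -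
  have "0 \<le> measure_pmf.prob p S" "measure_pmf.prob p S \<le> 1" "0 \<le> measure_pmf.prob r S" "measure_pmf.prob r S \<le> 1"
    by auto
  then show ?thesis by linarith
qed

lemma dTV_bdd: "bdd_above (range (\<lambda>S. \<bar>measure_pmf.prob p S - measure_pmf.prob r S\<bar>))"
  by (rule bdd_aboveI[where M=1]) (auto simp: abs_prob_diff_le1)

lemma dTV_ge: "\<bar>measure_pmf.prob p S - measure_pmf.prob r S\<bar> \<le> dTV p r"
  unfolding dTV_def by (rule cSUP_upper[OF _ dTV_bdd]) auto

lemma dTV_le: "(\<And>S. \<bar>measure_pmf.prob p S - measure_pmf.prob r S\<bar> \<le> c) \<Longrightarrow> dTV p r \<le> c"
  unfolding dTV_def by (rule cSUP_least) auto

lemma dTV_nonneg: "0 \<le> dTV p r"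
  using dTV_ge[of p "{}" r] by simp

lemma dTV_le_1: "dTV p r \<le> 1"
  by (rule dTV_le) (rule abs_prob_diff_le1)

lemma dTV_refl[simp]: "dTV p p = 0"
  using dTV_le[of p p 0] dTV_nonneg[of p p] by simp

lemma dTV_sym: "dTV p r = dTV r p"
  unfolding dTV_def by (simp add: abs_minus_commute)

lemma dTV_triangle: "dTV p r \<le> dTV p u + dTV u r"
proof (rule dTV_le)
  fix S
  have "\<bar>measure_pmf.prob p S - measure_pmf.prob r S\<bar> \<le>
     \<bar>measure_pmf.prob p S - measure_pmf.prob u S\<bar> + \<bar>measure_pmf.prob u S - measure_pmf.prob r S\<bar>"
    by linarith
  also have "\<dots> \<le> dTV p u + dTV u r" by (intro add_mono dTV_ge)
  finally show "\<bar>measure_pmf.prob p S - measure_pmf.prob r S\<bar> \<le> dTV p u + dTV u r" .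
qed

lemma dTV_map: "dTV (map_pmf h p) (map_pmf h r) \<le> dTV p r"
  by (rule dTV_le) (simp add: measure_map_pmf dTV_ge)

lemma dTV_bind:
  assumes "\<And>x. x \<in> set_pmf p \<Longrightarrow> dTV (f x) (g x) \<le> h x"
    and "\<And>x. 0 \<le> h x" and "\<And>x. h x \<le> B"
  shows "dTV (bind_pmf p f) (bind_pmf p g) \<le> measure_pmf.expectation p h"
proof (rule dTV_le)
  fix S
  have i1: "integrable (measure_pmf p) (\<lambda>x. measure_pmf.prob (f x) S)"
    by (rule measure_pmf.integrable_const_bound[where B=1]) auto
  have i2: "integrable (measure_pmf p) (\<lambda>x. measure_pmf.prob (g x) S)"
    by (rule measure_pmf.integrable_const_bound[where B=1]) auto
  have i3: "integrable (measure_pmf p) h"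
    by (rule measure_pmf.integrable_const_bound[where B=B]) (use assms in \<open>auto intro: order.trans\<close>)
  have "\<bar>measure_pmf.prob (bind_pmf p f) S - measure_pmf.prob (bind_pmf p g) S\<bar>
      = \<bar>\<integral>x. measure_pmf.prob (f x) S - measure_pmf.prob (g x) S \<partial>p\<bar>"
    by (simp add: prob_bind_pmf i1 i2)
  also have "\<dots> \<le> (\<integral>x. \<bar>measure_pmf.prob (f x) S - measure_pmf.prob (g x) S\<bar> \<partial>p)"
    by (rule integral_abs_bound)
  also have "\<dots> \<le> measure_pmf.expectation p h"
    by (rule integral_mono_AE) (use i1 i2 i3 assms(1) in \<open>auto simp: AE_measure_pmf_iff intro: order.trans[OF dTV_ge]\<close>)
  finally show "\<bar>measure_pmf.prob (bind_pmf p f) S - measure_pmf.prob (bind_pmf p g) S\<bar> \<le> measure_pmf.expectation p h" .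
qed

lemma prob_bind_le:
  assumes "\<And>x. x \<in> set_pmf p \<Longrightarrow> measure_pmf.prob (f x) S \<le> c"
  shows "measure_pmf.prob (bind_pmf p f) S \<le> c"
proof -
  have "measure_pmf.prob (bind_pmf p f) S = (\<integral>x. measure_pmf.prob (f x) S \<partial>p)"
    by (rule prob_bind_pmf)
  also have "\<dots> \<le> (\<integral>x. c \<partial>p)"
    by (rule integral_mono_AE) (auto simp: AE_measure_pmf_iff assms intro!: measure_pmf.integrable_const_bound[where B=1])
  finally show ?thesis by simp
qed


lemma pair_as_bind1: "pair_pmf p q = bind_pmf p (\<lambda>x. map_pmf (Pair x) q)"
  by (simp add: pair_pmf_def map_pmf_def)

lemma dTV_pair: "dTV (pair_pmf p1 q1) (pair_pmf p2 q2) \<le> dTV p1 p2 + dTV q1 q2"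
proof -
  have a: "dTV (pair_pmf p1 q1) (pair_pmf p2 q1) \<le> dTV p1 p2"
  proof -
    have "dTV (pair_pmf p1 q1) (pair_pmf p2 q1) =
       dTV (map_pmf (\<lambda>(x, y). (y, x)) (pair_pmf q1 p1)) (map_pmf (\<lambda>(x, y). (y, x)) (pair_pmf q1 p2))"
      by (metis pair_commute_pmf)
    also have "\<dots> \<le> dTV (pair_pmf q1 p1) (pair_pmf q1 p2)" by (rule dTV_map)
    also have "\<dots> \<le> measure_pmf.expectation q1 (\<lambda>_. dTV p1 p2)"
      unfolding pair_as_bind1
      by (rule dTV_bind[where B="dTV p1 p2"]) (auto intro: dTV_map dTV_nonneg)
    finally show ?thesis by simp
  qed
  have b: "dTV (pair_pmf p2 q1) (pair_pmf p2 q2) \<le> dTV q1 q2"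
  proof -
    have "dTV (pair_pmf p2 q1) (pair_pmf p2 q2) \<le> measure_pmf.expectation p2 (\<lambda>_. dTV q1 q2)"
      unfolding pair_as_bind1
      by (rule dTV_bind[where B="dTV q1 q2"]) (auto intro: dTV_map dTV_nonneg)
    then show ?thesis by simp
  qed
  show ?thesis using dTV_triangle[of "pair_pmf p1 q1" "pair_pmf p2 q2" "pair_pmf p2 q1"] a b by linarith
qed

lemma dTV_Pi:
  assumes "finite I"
  shows "dTV (Pi_pmf I d p) (Pi_pmf I d r) \<le> (\<Sum>i\<in>I. dTV (p i) (r i))"
  using assms
proof (induction I rule: finite_induct)
  case empty
  then show ?case by simp
next
  case (insert x F)
  have "dTV (Pi_pmf (insert x F) d p) (Pi_pmf (insert x F) d r)
      = dTV (map_pmf (\<lambda>(y,f). f(x:=y)) (pair_pmf (p x) (Pi_pmf F d p)))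
            (map_pmf (\<lambda>(y,f). f(x:=y)) (pair_pmf (r x) (Pi_pmf F d r)))"
    using insert by (simp add: Pi_pmf_insert)
  also have "\<dots> \<le> dTV (pair_pmf (p x) (Pi_pmf F d p)) (pair_pmf (r x) (Pi_pmf F d r))"
    by (rule dTV_map)
  also have "\<dots> \<le> dTV (p x) (r x) + dTV (Pi_pmf F d p) (Pi_pmf F d r)" by (rule dTV_pair)
  also have "\<dots> \<le> dTV (p x) (r x) + (\<Sum>i\<in>F. dTV (p i) (r i))" using insert by simp
  also have "\<dots> = (\<Sum>i\<in>insert x F. dTV (p i) (r i))" using insert by simp
  finally show ?case .
qed

lemma Pi_pmf_reindex:
  assumes "finite A" "bij_betw h A B" "\<And>x. x \<notin> A \<Longrightarrow> h x \<notin> B"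
  shows "Pi_pmf A dflt (\<lambda>x. p (h x)) = map_pmf (\<lambda>g. g \<circ> h) (Pi_pmf B dflt p)"
    (is "?lhs = ?rhs")
proof -
  have B: "finite B"
    using assms bij_betw_finite by auto
  have "pmf ?lhs g = pmf ?rhs g" for g
  proof (cases "\<forall>a. a \<notin> A \<longrightarrow> g a = dflt")
    case True
    define h' where "h' = the_inv_into A h"
    have h': "h' (h x) = x" if "x \<in> A" for x
      unfolding h'_def using that assms by (auto simp add: bij_betw_def the_inv_into_f_f)
    have h: "h (h' x) = x" if "x \<in> B" for x
      unfolding h'_def using that assms f_the_inv_into_f_bij_betw by fastforce
    have "pmf ?rhs g = measure_pmf.prob (Pi_pmf B dflt p) ((\<lambda>g. g \<circ> h) -` {g})"
      unfolding pmf_map by simp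
    also have "\<dots> = measure_pmf.prob (Pi_pmf B dflt p)
                                (((\<lambda>g. g \<circ> h) -` {g}) \<inter> PiE_dflt B dflt (\<lambda>_. UNIV))"
      using B by (intro measure_prob_cong_0) (auto simp: PiE_dflt_def pmf_Pi_outside)
    also have "\<dots> = pmf (Pi_pmf B dflt p) (\<lambda>x. if x \<in> B then g (h' x) else dflt)"
    proof -
      have "(if h x \<in> B then g (h' (h x)) else dflt) = g x" for x
        using h' assms True by (cases "x \<in> A") (auto simp add: bij_betwE)
      then have "(\<lambda>g. g \<circ> h) -` {g} \<inter> PiE_dflt B dflt (\<lambda>_. UNIV) =
            {(\<lambda>x. if x \<in> B then g (h' x) else dflt)}"
        using assms h' h True unfolding PiE_dflt_def by auto
      then show ?thesis
        by (simp add: measure_pmf_single)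
    qed
    also have "\<dots> = (\<Prod>x\<in>B. pmf (p x) (g (h' x)))"
      using B by (simp add: pmf_Pi)
    also have "\<dots> = (\<Prod>x\<in>A. pmf (p (h x)) (g (h' (h x))))"
      using assms(2) by (rule prod.reindex_bij_betw[symmetric])
    also have "\<dots> = (\<Prod>x\<in>A. pmf (p (h x)) (g x))"
      by (intro prod.cong) (auto simp: h')
    also have "\<dots> = pmf ?lhs g"
      using assms True by (simp add: pmf_Pi)
    finally show ?thesis
      by simp
  next
    case False
    have "pmf ?rhs g = infsetsum (pmf (Pi_pmf B dflt p)) ((\<lambda>g. g \<circ> h) -` {g})"
      using assms by (auto simp add: measure_pmf_conv_infsetsum pmf_map)
    also have "\<dots> = infsetsum (\<lambda>_. 0) ((\<lambda>g x. g (h x)) -` {g})"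
      using B False assms by (intro infsetsum_cong pmf_Pi_outside) fastforce+
    also have "\<dots> = 0"
      by simp
    finally show ?thesis
      using assms False by (auto simp add: pmf_Pi pmf_map)
  qed
  then show ?thesis
    by (rule pmf_eqI)
qed

lemma Pi_pmf_uncurry:
  assumes "finite I" "finite K"
  shows "Pi_pmf (I \<times> K) d (\<lambda>(i,k). P i k) =
         map_pmf (\<lambda>X (i,k). X i k) (Pi_pmf I (\<lambda>_. d) (\<lambda>i. Pi_pmf K d (P i)))"
proof (rule pmf_eqI)
  fix m :: "'a \<times> 'b \<Rightarrow> 'c"
  have inj: "inj (\<lambda>(X::'a \<Rightarrow> 'b \<Rightarrow> 'c) (i,k). X i k)"
    by (rule injI) (metis curry_case_prod)
  have m: "m = (\<lambda>(i,k). curry m i k)" by auto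
  have "pmf (map_pmf (\<lambda>X (i,k). X i k) (Pi_pmf I (\<lambda>_. d) (\<lambda>i. Pi_pmf K d (P i)))) m
      = pmf (Pi_pmf I (\<lambda>_. d) (\<lambda>i. Pi_pmf K d (P i))) (curry m)"
    by (subst m, subst pmf_map_inj'[OF inj]) simp
  also have "\<dots> = pmf (Pi_pmf (I \<times> K) d (\<lambda>(i,k). P i k)) m"
  proof (cases "\<forall>x. x \<notin> I \<times> K \<longrightarrow> m x = d")
    case True
    then have "pmf (Pi_pmf I (\<lambda>_. d) (\<lambda>i. Pi_pmf K d (P i))) (curry m)
        = (\<Prod>i\<in>I. \<Prod>k\<in>K. pmf (P i k) (m (i,k)))"
      using assms by (auto simp: pmf_Pi curry_def fun_eq_iff intro!: prod.cong)
    also have "\<dots> = (\<Prod>x\<in>I \<times> K. pmf ((\<lambda>(i,k). P i k) x) (m x))"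
      by (simp add: prod.cartesian_product case_prod_unfold)
    also have "\<dots> = pmf (Pi_pmf (I \<times> K) d (\<lambda>(i,k). P i k)) m"
      using True assms by (simp add: pmf_Pi)
    finally show ?thesis .
  next
    case False
    then obtain i k where ik: "(i,k) \<notin> I \<times> K" "m (i,k) \<noteq> d" by auto
    have "pmf (Pi_pmf I (\<lambda>_. d) (\<lambda>i. Pi_pmf K d (P i))) (curry m) = 0"
    proof (cases "i \<in> I")
      case True
      then have "k \<notin> K" using ik by auto
      then have "pmf (Pi_pmf K d (P i)) (curry m i) = 0"
        using ik assms by (auto simp: pmf_Pi curry_def)
      then have "(\<Prod>i\<in>I. pmf (Pi_pmf K d (P i)) (curry m i)) = 0"
        using True assms by (intro prod_zero) auto
      then show ?thesis using assms by (simp add: pmf_Pi)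
    next
      case False
      then have "curry m i \<noteq> (\<lambda>_. d)" using ik by (auto simp: curry_def fun_eq_iff)
      then show ?thesis using False assms by (auto simp: pmf_Pi)
    qed
    moreover have "pmf (Pi_pmf (I \<times> K) d (\<lambda>(i,k). P i k)) m = 0"
      using False assms by (auto simp: pmf_Pi)
    ultimately show ?thesis by simp
  qed
  finally show "pmf (Pi_pmf (I \<times> K) d (\<lambda>(i,k). P i k)) m =
     pmf (map_pmf (\<lambda>X (i,k). X i k) (Pi_pmf I (\<lambda>_. d) (\<lambda>i. Pi_pmf K d (P i)))) m" ..
qed


lemma map_bool_bernoulli:
  "map_pmf (f :: 'x \<Rightarrow> bool) \<nu> = bernoulli_pmf (measure_pmf.prob \<nu> {x. f x})"
proof (rule pmf_eqI)
  fix b :: bool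
  have 1: "0 \<le> measure_pmf.prob \<nu> {x. f x}" "measure_pmf.prob \<nu> {x. f x} \<le> 1" by auto
  show "pmf (map_pmf f \<nu>) b = pmf (bernoulli_pmf (measure_pmf.prob \<nu> {x. f x})) b"
  proof (cases b)
    case True
    then show ?thesis using 1 by (simp add: pmf_map vimage_def)
  next
    case False
    have "measure_pmf.prob \<nu> (f -` {False}) = measure_pmf.prob \<nu> (- {x. f x})"
      by (rule arg_cong[where f="measure_pmf.prob \<nu>"]) auto
    also have "\<dots> = 1 - measure_pmf.prob \<nu> {x. f x}"
      by (simp add: measure_pmf.prob_compl[symmetric] Compl_eq_Diff_UNIV)
    finally show ?thesis using 1 False by (simp add: pmf_map)
  qed
qed

lemma row_bound:
  fixes \<nu> :: "(nat \<Rightarrow> bool) pmf" and j :: "nat \<Rightarrow> nat"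
  assumes inj: "inj_on j {..<q}" and jn: "\<forall>k<q. j k < n"
    and ind: "eps_independent e \<nu> (map j [0..<q])"
  shows "dTV (Pi_pmf {..<q} False (\<lambda>k. map_pmf (\<lambda>x. x (j k)) \<nu>))
             (map_pmf (\<lambda>x k. if k < q then x (j k) else False) \<nu>) \<le> e"
proof -
  define JS where "JS = j ` {..<q}"
  define jj where "jj = (\<lambda>k. if k < q then j k else n)"
  define R where "R = (\<lambda>(x::nat \<Rightarrow> bool) k. if k < q then x (j k) else False)"
  have setl: "set (map j [0..<q]) = JS" unfolding JS_def by auto
  have JSn: "JS \<subseteq> {..<n}" using jn unfolding JS_def by auto
  have finJS: "finite JS" unfolding JS_def by auto
  have bij: "bij_betw jj {..<q} JS"
    unfolding bij_betw_def JS_def jj_def using inj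
    by (auto simp: inj_on_def image_def)
  have out: "\<And>x. x \<notin> {..<q} \<Longrightarrow> jj x \<notin> JS" using JSn unfolding jj_def by auto
  have "Pi_pmf {..<q} False (\<lambda>k. map_pmf (\<lambda>x. x (j k)) \<nu>)
      = Pi_pmf {..<q} False (\<lambda>k. (\<lambda>m. map_pmf (\<lambda>x. x m) \<nu>) (jj k))"
    by (rule Pi_pmf_cong) (auto simp: jj_def)
  also have "\<dots> = map_pmf (\<lambda>g. g \<circ> jj) (Pi_pmf JS False (\<lambda>m. map_pmf (\<lambda>x. x m) \<nu>))"
    by (rule Pi_pmf_reindex[OF _ bij out]) auto
  also have "\<dots> = map_pmf R (prod_marginals JS \<nu>)"
    unfolding prod_marginals_def
  proof (rule map_pmf_cong[OF refl])
    fix g assume "g \<in> set_pmf (Pi_pmf JS False (\<lambda>m. map_pmf (\<lambda>x. x m) \<nu>))"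
    then have "\<forall>x. x \<notin> JS \<longrightarrow> g x = False" using set_Pi_pmf_subset[OF finJS, of False "\<lambda>m. map_pmf (\<lambda>x. x m) \<nu>"] by blast
    then show "g \<circ> jj = R g" using out unfolding R_def jj_def by (auto simp: fun_eq_iff)
  qed
  finally have 1: "Pi_pmf {..<q} False (\<lambda>k. map_pmf (\<lambda>x. x (j k)) \<nu>) = map_pmf R (prod_marginals JS \<nu>)" .
  have 2: "map_pmf R \<nu> = map_pmf R (proj_pmf JS \<nu>)"
    unfolding proj_pmf_def map_pmf_comp R_def JS_def by (intro map_pmf_cong) (auto simp: fun_eq_iff)
  have "dTV (map_pmf R (prod_marginals JS \<nu>)) (map_pmf R (proj_pmf JS \<nu>)) \<le> dTV (prod_marginals JS \<nu>) (proj_pmf JS \<nu>)"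
    by (rule dTV_map)
  also have "\<dots> \<le> e" using ind unfolding eps_independent_def setl by (simp add: dTV_sym)
  finally show ?thesis using 1 2 unfolding R_def by simp
qed


lemma core:
  fixes \<nu> :: "'a \<Rightarrow> (nat \<Rightarrow> bool) pmf" and a :: "nat \<Rightarrow> 'a" and j :: "nat \<Rightarrow> nat"
    and T :: "nat \<Rightarrow> 'a \<Rightarrow> real"
  assumes inj: "inj_on j {..<q}" and jn: "\<forall>k<q. j k < n"
    and ind: "\<forall>i<s. eps_independent e (\<nu> (a i)) (map j [0..<q])"
    and tp: "\<forall>i<s. \<forall>k<q. T (j k) (a i) = measure_pmf.prob (\<nu> (a i)) {x. x (j k)}"
  shows "dTV (Pi_pmf ({..<s} \<times> {..<q}) False (\<lambda>(i, k). bernoulli_pmf (T (j k) (a i))))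
            (map_pmf (\<lambda>x. \<lambda>(i,k). if i < s \<and> k < q then x i (j k) else False)
               (Pi_pmf {..<s} (\<lambda>_. False) (\<lambda>i. \<nu> (a i)))) \<le> real s * e"
proof -
  define R where "R = (\<lambda>(x::nat \<Rightarrow> bool) k. if k < q then x (j k) else False)"
  have sim: "Pi_pmf ({..<s} \<times> {..<q}) False (\<lambda>(i, k). bernoulli_pmf (T (j k) (a i)))
     = map_pmf (\<lambda>X (i,k). X i k) (Pi_pmf {..<s} (\<lambda>_. False)
          (\<lambda>i. Pi_pmf {..<q} False (\<lambda>k. map_pmf (\<lambda>x. x (j k)) (\<nu> (a i)))))"
  proof -
    have "Pi_pmf ({..<s} \<times> {..<q}) False (\<lambda>(i, k). bernoulli_pmf (T (j k) (a i)))
        = Pi_pmf ({..<s} \<times> {..<q}) False (\<lambda>(i, k). map_pmf (\<lambda>x. x (j k)) (\<nu> (a i)))"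
      by (rule Pi_pmf_cong) (auto simp: tp map_bool_bernoulli)
    also have "\<dots> = map_pmf (\<lambda>X (i,k). X i k) (Pi_pmf {..<s} (\<lambda>_. False)
          (\<lambda>i. Pi_pmf {..<q} False (\<lambda>k. map_pmf (\<lambda>x. x (j k)) (\<nu> (a i)))))"
      by (rule Pi_pmf_uncurry) auto
    finally show ?thesis .
  qed
  have test: "map_pmf (\<lambda>x. \<lambda>(i,k). if i < s \<and> k < q then x i (j k) else False)
               (Pi_pmf {..<s} (\<lambda>_. False) (\<lambda>i. \<nu> (a i)))
      = map_pmf (\<lambda>X (i,k). X i k) (Pi_pmf {..<s} (\<lambda>_. False) (\<lambda>i. map_pmf R (\<nu> (a i))))"
  proof -
    have "Pi_pmf {..<s} (\<lambda>_. False) (\<lambda>i. map_pmf R (\<nu> (a i)))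
        = map_pmf (\<lambda>h. R \<circ> h) (Pi_pmf {..<s} (\<lambda>_. False) (\<lambda>i. \<nu> (a i)))"
      by (rule Pi_pmf_map) (auto simp: R_def fun_eq_iff)
    then have "map_pmf (\<lambda>X (i,k). X i k) (Pi_pmf {..<s} (\<lambda>_. False) (\<lambda>i. map_pmf R (\<nu> (a i))))
       = map_pmf (\<lambda>h. (\<lambda>(i,k). R (h i) k)) (Pi_pmf {..<s} (\<lambda>_. False) (\<lambda>i. \<nu> (a i)))"
      by (simp add: map_pmf_comp o_def)
    also have "\<dots> = map_pmf (\<lambda>x. \<lambda>(i,k). if i < s \<and> k < q then x i (j k) else False)
               (Pi_pmf {..<s} (\<lambda>_. False) (\<lambda>i. \<nu> (a i)))"
    proof (rule map_pmf_cong[OF refl])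
      fix h assume "h \<in> set_pmf (Pi_pmf {..<s} (\<lambda>_. False) (\<lambda>i. \<nu> (a i)))"
      then have "\<forall>x. x \<notin> {..<s} \<longrightarrow> h x = (\<lambda>_. False)"
        using set_Pi_pmf_subset[of "{..<s}" "\<lambda>_. False" "\<lambda>i. \<nu> (a i)"] by blast
      then show "(\<lambda>(i,k). R (h i) k) = (\<lambda>(i,k). if i < s \<and> k < q then h i (j k) else False)"
        unfolding R_def by (auto simp: fun_eq_iff)
    qed
    finally show ?thesis by simp
  qed
  have "dTV (Pi_pmf {..<s} (\<lambda>_. False) (\<lambda>i. Pi_pmf {..<q} False (\<lambda>k. map_pmf (\<lambda>x. x (j k)) (\<nu> (a i)))))
            (Pi_pmf {..<s} (\<lambda>_. False) (\<lambda>i. map_pmf R (\<nu> (a i))))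
     \<le> (\<Sum>i<s. dTV (Pi_pmf {..<q} False (\<lambda>k. map_pmf (\<lambda>x. x (j k)) (\<nu> (a i)))) (map_pmf R (\<nu> (a i))))"
    by (rule dTV_Pi) auto
  also have "\<dots> \<le> (\<Sum>i<s. e)"
    by (rule sum_mono) (use row_bound[OF inj jn] ind in \<open>auto simp: R_def\<close>)
  also have "\<dots> = real s * e" by simp
  finally show ?thesis unfolding sim test
    using dTV_map order.trans by blast
qed


lemma prob_pair_le:
  assumes "\<And>y. y \<in> set_pmf q \<Longrightarrow> measure_pmf.prob p {x. (x,y) \<in> S} \<le> c"
  shows "measure_pmf.prob (pair_pmf p q) S \<le> c"
proof -
  have "measure_pmf.prob (pair_pmf p q) S
      = measure_pmf.prob (bind_pmf q (\<lambda>y. map_pmf (Pair y) p)) ((\<lambda>(x, y). (y, x)) -` S)"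
    by (subst pair_commute_pmf) (simp add: measure_map_pmf pair_as_bind1)
  also have "\<dots> \<le> c"
  proof (rule prob_bind_le)
    fix y assume "y \<in> set_pmf q"
    then show "measure_pmf.prob (map_pmf (Pair y) p) ((\<lambda>(x, y). (y, x)) -` S) \<le> c"
      using assms by (simp add: measure_map_pmf vimage_def)
  qed
  finally show ?thesis .
qed

lemma prob_pair_fst: "measure_pmf.prob (pair_pmf p q) {z. P (fst z)} = measure_pmf.prob p {x. P x}"
proof -
  have "measure_pmf.prob p {x. P x} = measure_pmf.prob (map_pmf fst (pair_pmf p q)) {x. P x}"
    by (simp add: map_fst_pair_pmf)
  then show ?thesis by (simp add: measure_map_pmf vimage_def)
qed

lemma prob_pair_snd: "measure_pmf.prob (pair_pmf p q) {z. P (snd z)} = measure_pmf.prob q {x. P x}"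
proof -
  have "measure_pmf.prob q {x. P x} = measure_pmf.prob (map_pmf snd (pair_pmf p q)) {x. P x}"
    by (simp add: map_snd_pair_pmf)
  then show ?thesis by (simp add: measure_map_pmf vimage_def)
qed

lemma collision:
  fixes q k l n :: nat
  assumes "k < q" "l < q" "k \<noteq> l" "0 < n"
  shows "measure_pmf.prob (Pi_pmf {..<q} (0::nat) (\<lambda>_. pmf_of_set {..<n})) {j. j k = j l} \<le> 1 / real n"
proof -
  define P' where "P' = Pi_pmf ({..<q} - {k}) (0::nat) (\<lambda>_. pmf_of_set {..<n})"
  have q: "{..<q} = insert k ({..<q} - {k})" using assms by auto
  have "Pi_pmf {..<q} (0::nat) (\<lambda>_. pmf_of_set {..<n})
      = map_pmf (\<lambda>(y,f). f(k:=y)) (pair_pmf (pmf_of_set {..<n}) P')"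
  proof -
    have fin: "finite ({..<q} - {k})" "k \<notin> {..<q} - {k}" by auto
    have "Pi_pmf (insert k ({..<q}-{k})) (0::nat) (\<lambda>_. pmf_of_set {..<n})
       = map_pmf (\<lambda>(y,f). f(k:=y)) (pair_pmf (pmf_of_set {..<n}) P')"
      unfolding P'_def by (rule Pi_pmf_insert[OF fin])
    then show ?thesis by (simp only: q[symmetric])
  qed
  then have "measure_pmf.prob (Pi_pmf {..<q} (0::nat) (\<lambda>_. pmf_of_set {..<n})) {j. j k = j l}
      = measure_pmf.prob (pair_pmf (pmf_of_set {..<n}) P') {(y,f). y = f l}"
    using assms(3) by (simp add: measure_map_pmf vimage_def case_prod_unfold)
  also have "\<dots> \<le> 1 / real n"
  proof (rule prob_pair_le)
    fix f
    have "measure_pmf.prob (pmf_of_set {..<n}) {x. (x, f) \<in> {(y, f). y = f l}}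
        = real (card ({..<n} \<inter> {f l})) / real n"
    proof -
      have ne: "{..<n} \<noteq> {}" using assms by auto
      show ?thesis using measure_pmf_of_set[OF ne, of "{f l}"] by simp
    qed
    also have "\<dots> \<le> 1 / real n"
      by (intro divide_right_mono) (auto simp: card_le_Suc0_iff_eq)
    finally show "measure_pmf.prob (pmf_of_set {..<n}) {x. (x, f) \<in> {(y, f). y = f l}} \<le> 1 / real n" .
  qed
  finally show ?thesis .
qed

lemma tuple_bound:
  assumes n: "0 < n \<or> q = 0" and e: "0 \<le> e"
    and Bd: "Bd \<subseteq> tuples n q" "real (card Bd) \<le> e * real (card (tuples n q))"
  shows "measure_pmf.prob (Pi_pmf {..<q} (0::nat) (\<lambda>_. pmf_of_set {..<n})) {j. map j [0..<q] \<in> Bd} \<le> e"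
proof -
  define L where "L = {xs. set xs \<subseteq> {..<n} \<and> length xs = q}"
  define PD where "PD = PiE_dflt {..<q} (0::nat) (\<lambda>_. {..<n})"
  define li where "li = (\<lambda>j::nat \<Rightarrow> nat. map j [0..<q])"
  have finL: "finite L" unfolding L_def by (rule finite_lists_length_eq) auto
  have L0: "L \<noteq> {}"
    using n unfolding L_def by (auto intro!: exI[of _ "replicate q 0"])
  have Jp: "Pi_pmf {..<q} (0::nat) (\<lambda>_. pmf_of_set {..<n}) = pmf_of_set PD"
    unfolding PD_def using n by (intro Pi_pmf_of_set) auto
  have finPD: "finite PD" unfolding PD_def by (intro finite_PiE_dflt) auto
  have injli: "inj_on li PD"
  proof (rule inj_onI)
    fix f g assume "f \<in> PD" "g \<in> PD" "li f = li g"
    then show "f = g" unfolding PD_def PiE_dflt_def li_def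
      by (auto simp: fun_eq_iff map_eq_conv)
  qed
  have imgli: "li ` PD = L"
  proof
    show "li ` PD \<subseteq> L" unfolding PD_def PiE_dflt_def li_def L_def by auto
    show "L \<subseteq> li ` PD"
    proof
      fix xs assume xs: "xs \<in> L"
      define f where "f = (\<lambda>k. if k < q then xs ! k else 0)"
      have "li f = xs" using xs unfolding li_def f_def L_def
        by (auto intro: nth_equalityI)
      moreover have "f \<in> PD" using xs unfolding f_def PD_def PiE_dflt_def L_def
        by (auto dest: nth_mem)
      ultimately show "xs \<in> li ` PD" by blast
    qed
  qed
  have PD0: "PD \<noteq> {}" using imgli L0 by auto
  have "measure_pmf.prob (Pi_pmf {..<q} (0::nat) (\<lambda>_. pmf_of_set {..<n})) {j. map j [0..<q] \<in> Bd}
      = measure_pmf.prob (map_pmf li (pmf_of_set PD)) Bd"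
    unfolding Jp by (simp add: measure_map_pmf vimage_def li_def)
  also have "\<dots> = measure_pmf.prob (pmf_of_set L) Bd"
    using map_pmf_of_set_inj[OF injli PD0 finPD] imgli by simp
  also have "\<dots> = real (card (L \<inter> Bd)) / real (card L)"
    using finL L0 by (simp add: measure_pmf_of_set)
  also have "\<dots> \<le> real (card Bd) / real (card L)"
    using Bd finL by (intro divide_right_mono) (auto intro!: card_mono finite_subset[OF _ finL] simp: tuples_def L_def)
  also have "\<dots> \<le> e * real (card (tuples n q)) / real (card L)"
    using Bd by (intro divide_right_mono) auto
  also have "\<dots> \<le> e * real (card L) / real (card L)"
    using e finL by (intro divide_right_mono mult_left_mono) (auto intro!: card_mono simp: tuples_def L_def)
  also have "\<dots> \<le> e"
    using finL L0 by simp
  finally show ?thesis .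
qed


lemma q0case:
  "dTV (D_sim s 0 \<eta> \<Lambda>) (D_test n s 0 \<mu>) = 0"
proof -
  have "D_sim s 0 \<eta> \<Lambda> = D_test n s 0 \<mu>"
    by (simp add: D_sim_def D_test_def bind_return_pmf fun_eq_iff case_prod_unfold)
  then show ?thesis by simp
qed


lemma decomp: "map_pmf fst \<xi> = bind_pmf (weight_dist \<xi>) (cond_first \<xi>)"
proof -
  have "bind_pmf (map_pmf snd \<xi>) (\<lambda>a. cond_pmf \<xi> {z. snd z = a}) = \<xi>"
    by (rule bind_cond_pmf_cancel) (auto simp: measure_map_pmf vimage_def eq_commute)
  then have "map_pmf fst \<xi> = map_pmf fst (bind_pmf (map_pmf snd \<xi>) (\<lambda>a. cond_pmf \<xi> {z. snd z = a}))"
    by simp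
  also have "\<dots> = bind_pmf (weight_dist \<xi>) (cond_first \<xi>)"
    by (simp add: map_bind_pmf weight_dist_def cond_first_def[abs_def])
  finally show ?thesis .
qed

lemma bind_bind_pair:
  "bind_pmf p (\<lambda>x. bind_pmf q (F x)) = bind_pmf (pair_pmf p q) (\<lambda>z. F (fst z) (snd z))"
  by (simp add: pair_pmf_def bind_assoc_pmf bind_return_pmf)

lemma expectation_ind:
  "measure_pmf.expectation P (\<lambda>z. c + indicator B z) = c + measure_pmf.prob P B"
  by (simp add: Bochner_Integration.integral_add measure_pmf.emeasure_eq_measure)

lemma sim_eq:
  "D_sim s q (weight_dist \<xi>) (type_dist n \<xi>) =
   bind_pmf (Pi_pmf {..<q} 0 (\<lambda>_. pmf_of_set {..<n})) (\<lambda>j.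
   bind_pmf (Pi_pmf {..<s} undefined (\<lambda>_. weight_dist \<xi>)) (\<lambda>a.
     Pi_pmf ({..<s} \<times> {..<q}) False (\<lambda>(i, k). bernoulli_pmf (type_of \<xi> (j k) (a i)))))"
proof -
  define Tt where "Tt = type_of \<xi>"
  define g where "g = (\<lambda>(f::nat \<Rightarrow> 'a \<Rightarrow> real) x. if x \<in> {..<q} then f x else (\<lambda>_. 0))"
  have "Pi_pmf {..<q} (\<lambda>_. 0) (\<lambda>_. map_pmf Tt (pmf_of_set {..<n}))
     = map_pmf g (Pi_pmf {..<q} (Tt 0) (\<lambda>_. map_pmf Tt (pmf_of_set {..<n})))"
    unfolding g_def by (rule Pi_pmf_default_swap[symmetric]) auto
  also have "Pi_pmf {..<q} (Tt 0) (\<lambda>_. map_pmf Tt (pmf_of_set {..<n}))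
      = map_pmf (\<lambda>h. Tt \<circ> h) (Pi_pmf {..<q} 0 (\<lambda>_. pmf_of_set {..<n}))"
    by (rule Pi_pmf_map) auto
  finally have *: "Pi_pmf {..<q} (\<lambda>_. 0) (\<lambda>_. map_pmf Tt (pmf_of_set {..<n}))
      = map_pmf (\<lambda>h. g (Tt \<circ> h)) (Pi_pmf {..<q} 0 (\<lambda>_. pmf_of_set {..<n}))"
    by (simp add: map_pmf_comp)
  show ?thesis
    unfolding D_sim_def type_dist_def Tt_def[symmetric] * bind_map_pmf
    by (intro bind_pmf_cong refl Pi_pmf_cong) (auto simp: g_def)
qed

lemma test_eq:
  "D_test n s q (map_pmf fst \<xi>) =
   bind_pmf (Pi_pmf {..<q} 0 (\<lambda>_. pmf_of_set {..<n})) (\<lambda>j.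
   bind_pmf (Pi_pmf {..<s} undefined (\<lambda>_. weight_dist \<xi>)) (\<lambda>a.
     map_pmf (\<lambda>x. \<lambda>(i,k). if i < s \<and> k < q then x i (j k) else False)
       (Pi_pmf {..<s} (\<lambda>_. False) (\<lambda>i. cond_first \<xi> (a i)))))"
proof -
  have R: "Pi_pmf {..<s} (\<lambda>_. False) (\<lambda>_. map_pmf fst \<xi>)
     = bind_pmf (Pi_pmf {..<s} undefined (\<lambda>_. weight_dist \<xi>)) (\<lambda>a. Pi_pmf {..<s} (\<lambda>_. False) (\<lambda>i. cond_first \<xi> (a i)))"
    unfolding decomp by (rule Pi_pmf_bind) auto
  show ?thesis
    unfolding D_test_def
    apply (subst bind_commute_pmf)
    apply (simp add: map_pmf_def[symmetric] R map_bind_pmf)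
    done
qed


theorem lemma4p1:
  fixes s q n :: nat and \<epsilon> :: real and A :: "'a set"
    and \<mu> :: "(nat \<Rightarrow> bool) pmf" and \<xi> :: "((nat \<Rightarrow> bool) \<times> 'a) pmf"
  assumes "0 < \<epsilon>" "\<epsilon> < 1"
    and "is_detailing n \<mu> A \<xi>"
    and "good_detailing n (\<epsilon> / (3 * (real s + 1))) q A \<xi>"
    and "real n \<ge> 6 * real q ^ 2 * (real s + 1) / \<epsilon>"
  shows "dTV (D_sim s q (weight_dist \<xi>) (type_dist n \<xi>)) (D_test n s q \<mu>) \<le> \<epsilon>"
proof (cases "q = 0")
  case True
  have "dTV (D_sim s 0 (weight_dist \<xi>) (type_dist n \<xi>)) (D_test n s 0 \<mu>) = 0"
    by (rule q0case)
  then show ?thesis using True assms(1) by simp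
next
  case False
  define e where "e = \<epsilon> / (3 * (real s + 1))"
  have e0: "0 \<le> e" unfolding e_def using assms(1) by simp
  have npos: "0 < n"
  proof -
    have "0 < 6 * real q ^ 2 * (real s + 1) / \<epsilon>" using False assms(1) by simp
    then show ?thesis using assms(5) by simp
  qed
  have mu: "\<mu> = map_pmf fst \<xi>" using assms(3) unfolding is_detailing_def by simp
  define \<eta> where "\<eta> = weight_dist \<xi>"
  define \<nu> where "\<nu> = cond_first \<xi>"
  obtain Js where Js: "Js \<subseteq> A" "measure_pmf.prob \<eta> Js \<ge> 1 - e"
     "\<And>a. a \<in> Js \<Longrightarrow> pmf \<eta> a > 0 \<and> good_dist n e q (\<nu> a)"
    using assms(4) unfolding good_detailing_def e_def \<eta>_def \<nu>_def by blast
  define Jp where "Jp = Pi_pmf {..<q} (0::nat) (\<lambda>_. pmf_of_set {..<n})"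
  define Ap where "Ap = Pi_pmf {..<s} undefined (\<lambda>_. \<eta>)"
  define P where "P = pair_pmf Jp Ap"
  define Sim where "Sim = (\<lambda>(j::nat \<Rightarrow> nat) (a::nat \<Rightarrow> 'a).
     Pi_pmf ({..<s} \<times> {..<q}) False (\<lambda>(i, k). bernoulli_pmf (type_of \<xi> (j k) (a i))))"
  define Test where "Test = (\<lambda>(j::nat \<Rightarrow> nat) (a::nat \<Rightarrow> 'a).
     map_pmf (\<lambda>x. \<lambda>(i,k). if i < s \<and> k < q then x i (j k) else False)
       (Pi_pmf {..<s} (\<lambda>_. False) (\<lambda>i. \<nu> (a i))))"
  define Bad where "Bad = {z::(nat \<Rightarrow> nat) \<times> (nat \<Rightarrow> 'a). \<not> (inj_on (fst z) {..<q} \<and>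
      (\<forall>i<s. snd z i \<in> Js \<and> eps_independent e (\<nu> (snd z i)) (map (fst z) [0..<q])))}"
  have Dsim: "D_sim s q (weight_dist \<xi>) (type_dist n \<xi>) = bind_pmf P (\<lambda>z. Sim (fst z) (snd z))"
    unfolding sim_eq P_def Jp_def Ap_def Sim_def \<eta>_def by (rule bind_bind_pair)
  have Dtest: "D_test n s q \<mu> = bind_pmf P (\<lambda>z. Test (fst z) (snd z))"
    unfolding mu test_eq P_def Jp_def Ap_def Test_def \<eta>_def \<nu>_def by (rule bind_bind_pair)
  have setJp: "j k < n" if "j \<in> set_pmf Jp" "k < q" for j k
  proof -
    have U: "set_pmf (pmf_of_set {..<n}) = {..<n}" by (rule set_pmf_of_set) (use npos in auto)
    show ?thesis using that unfolding Jp_def by (auto simp: set_Pi_pmf PiE_dflt_def U)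
  qed
  have pointwise: "dTV (Sim (fst z) (snd z)) (Test (fst z) (snd z)) \<le> real s * e + indicator Bad z"
    if z: "z \<in> set_pmf P" for z
  proof (cases "z \<in> Bad")
    case True
    have "0 \<le> real s * e" using e0 by simp
    then show ?thesis using True dTV_le_1[of "Sim (fst z) (snd z)" "Test (fst z) (snd z)"] by simp
  next
    case False
    have jz: "fst z \<in> set_pmf Jp" using z unfolding P_def by auto
    have "dTV (Sim (fst z) (snd z)) (Test (fst z) (snd z)) \<le> real s * e"
      unfolding Sim_def Test_def
    proof (rule core)
      show "inj_on (fst z) {..<q}" using False unfolding Bad_def by auto
      show "\<forall>k<q. fst z k < n" using setJp[OF jz] by auto
      show "\<forall>i<s. eps_independent e (\<nu> (snd z i)) (map (fst z) [0..<q])"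
        using False unfolding Bad_def by auto
      show "\<forall>i<s. \<forall>k<q. type_of \<xi> (fst z k) (snd z i) = measure_pmf.prob (\<nu> (snd z i)) {x. x (fst z k)}"
      proof (intro allI impI)
        fix i k assume "i < s" "k < q"
        then have "snd z i \<in> Js" using False unfolding Bad_def by auto
        then have "pmf \<eta> (snd z i) > 0" using Js(3) by blast
        then show "type_of \<xi> (fst z k) (snd z i) = measure_pmf.prob (\<nu> (snd z i)) {x. x (fst z k)}"
          unfolding type_of_def \<eta>_def \<nu>_def by simp
      qed
    qed
    then show ?thesis using False by simp
  qed
  have "dTV (D_sim s q (weight_dist \<xi>) (type_dist n \<xi>)) (D_test n s q \<mu>)
      \<le> measure_pmf.expectation P (\<lambda>z. real s * e + indicator Bad z)"
    unfolding Dsim Dtest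
    by (rule dTV_bind[where B="real s * e + 1"]) (use pointwise e0 in \<open>auto simp: indicator_def\<close>)
  also have "\<dots> = real s * e + measure_pmf.prob P Bad" by (rule expectation_ind)
  finally have main: "dTV (D_sim s q (weight_dist \<xi>) (type_dist n \<xi>)) (D_test n s q \<mu>)
      \<le> real s * e + measure_pmf.prob P Bad" .
  define B0 where "B0 = (\<Union>k<q. \<Union>l<q. {z::(nat \<Rightarrow> nat) \<times> (nat \<Rightarrow> 'a). k \<noteq> l \<and> fst z k = fst z l})"
  define B1 where "B1 = (\<lambda>i. {z::(nat \<Rightarrow> nat) \<times> (nat \<Rightarrow> 'a). snd z i \<notin> Js})"
  define B2 where "B2 = (\<lambda>i. {z::(nat \<Rightarrow> nat) \<times> (nat \<Rightarrow> 'a). snd z i \<in> Js \<and> map (fst z) [0..<q] \<in> tuples n q \<and>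
      \<not> eps_independent e (\<nu> (snd z i)) (map (fst z) [0..<q])})"
  have sub: "Bad \<inter> set_pmf P \<subseteq> B0 \<union> (\<Union>i<s. B1 i) \<union> (\<Union>i<s. B2 i)"
  proof
    fix z assume zb: "z \<in> Bad \<inter> set_pmf P"
    have jz: "fst z \<in> set_pmf Jp" using zb unfolding P_def by auto
    show "z \<in> B0 \<union> (\<Union>i<s. B1 i) \<union> (\<Union>i<s. B2 i)"
    proof (cases "inj_on (fst z) {..<q}")
      case False
      then show ?thesis unfolding B0_def inj_on_def by auto
    next
      case True
      then have tup: "map (fst z) [0..<q] \<in> tuples n q"
        using setJp[OF jz] unfolding tuples_def by (auto simp: distinct_map atLeast0LessThan)
      from zb True obtain i where "i < s" "\<not> (snd z i \<in> Js \<and> eps_independent e (\<nu> (snd z i)) (map (fst z) [0..<q]))"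
        unfolding Bad_def by auto
      then show ?thesis using tup unfolding B1_def B2_def by auto
    qed
  qed
  have pB0: "measure_pmf.prob P B0 \<le> real q * real q / real n"
  proof -
    have "measure_pmf.prob P B0 \<le> (\<Sum>k<q. measure_pmf.prob P (\<Union>l<q. {z. k \<noteq> l \<and> fst z k = fst z l}))"
      unfolding B0_def by (rule measure_pmf.finite_measure_subadditive_finite) auto
    also have "\<dots> \<le> (\<Sum>k<q. \<Sum>l<q. measure_pmf.prob P {z. k \<noteq> l \<and> fst z k = fst z l})"
      by (intro sum_mono measure_pmf.finite_measure_subadditive_finite) auto
    also have "\<dots> \<le> (\<Sum>k<q. \<Sum>l<q. 1 / real n)"
    proof (intro sum_mono)
      fix k l assume kl: "k \<in> {..<q}" "l \<in> {..<q}"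
      show "measure_pmf.prob P {z. k \<noteq> l \<and> fst z k = fst z l} \<le> 1 / real n"
      proof (cases "k = l")
        case True
        then show ?thesis by simp
      next
        case False
        have "measure_pmf.prob P {z. k \<noteq> l \<and> fst z k = fst z l} = measure_pmf.prob Jp {j. j k = j l}"
          unfolding P_def using False prob_pair_fst[of Jp Ap "\<lambda>j. j k = j l"] by simp
        also have "\<dots> \<le> 1 / real n" unfolding Jp_def using kl False npos by (intro collision) auto
        finally show ?thesis .
      qed
    qed
    also have "\<dots> = real q * real q / real n" by simp
    finally show ?thesis .
  qed
  have pB1: "measure_pmf.prob P (B1 i) \<le> e" if "i < s" for i
  proof -
    have "measure_pmf.prob P (B1 i) = measure_pmf.prob Ap {a. a i \<notin> Js}"
      unfolding P_def B1_def by (rule prob_pair_snd)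
    also have "\<dots> = measure_pmf.prob (map_pmf (\<lambda>a. a i) Ap) (- Js)"
      by (simp add: measure_map_pmf vimage_def Compl_eq)
    also have "map_pmf (\<lambda>a. a i) Ap = \<eta>" unfolding Ap_def using that by (simp add: Pi_pmf_component)
    also have "measure_pmf.prob \<eta> (- Js) = 1 - measure_pmf.prob \<eta> Js"
      by (simp add: measure_pmf.prob_compl[symmetric] Compl_eq_Diff_UNIV)
    finally show ?thesis using Js(2) by simp
  qed
  have pB2: "measure_pmf.prob P (B2 i) \<le> e" if "i < s" for i
    unfolding P_def
  proof (rule prob_pair_le)
    fix a assume "a \<in> set_pmf Ap"
    show "measure_pmf.prob Jp {j. (j, a) \<in> B2 i} \<le> e"
    proof (cases "a i \<in> Js")
      case False
      then show ?thesis unfolding B2_def using e0 by simp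
    next
      case True
      define Bd where "Bd = {js \<in> tuples n q. \<not> eps_independent e (\<nu> (a i)) js}"
      have gd: "good_dist n e q (\<nu> (a i))" using Js(3)[OF True] by blast
      have fint: "finite (tuples n q)"
        by (rule finite_subset[of _ "{xs. set xs \<subseteq> {..<n} \<and> length xs = q}"])
           (auto simp: tuples_def intro: finite_lists_length_eq)
      have "card (tuples n q) = card ({js \<in> tuples n q. eps_independent e (\<nu> (a i)) js} \<union> Bd)"
        by (rule arg_cong[where f=card]) (auto simp: Bd_def)
      also have "\<dots> = card {js \<in> tuples n q. eps_independent e (\<nu> (a i)) js} + card Bd"
        by (rule card_Un_disjoint) (use fint in \<open>auto simp: Bd_def\<close>)
      finally have "card (tuples n q) = card {js \<in> tuples n q. eps_independent e (\<nu> (a i)) js} + card Bd" .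
      then have cBd: "real (card Bd) \<le> e * real (card (tuples n q))"
        using gd unfolding good_dist_def by (simp add: algebra_simps)
      have "{j. (j, a) \<in> B2 i} = {j. map j [0..<q] \<in> Bd}"
        unfolding B2_def Bd_def using True by auto
      then show ?thesis unfolding Jp_def using tuple_bound[of n q e Bd] npos e0 cBd
        by (simp add: Bd_def)
    qed
  qed
  have "measure_pmf.prob P Bad = measure_pmf.prob P (Bad \<inter> set_pmf P)"
    by (simp add: measure_Int_set_pmf)
  also have "\<dots> \<le> measure_pmf.prob P (B0 \<union> (\<Union>i<s. B1 i) \<union> (\<Union>i<s. B2 i))"
    by (rule measure_pmf.finite_measure_mono[OF sub]) auto
  also have "\<dots> \<le> measure_pmf.prob P B0 + measure_pmf.prob P (\<Union>i<s. B1 i) + measure_pmf.prob P (\<Union>i<s. B2 i)"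
    using measure_Un_le[of "B0 \<union> (\<Union>i<s. B1 i)" "measure_pmf P" "\<Union>i<s. B2 i"]
      measure_Un_le[of "B0" "measure_pmf P" "\<Union>i<s. B1 i"] by simp
  also have "\<dots> \<le> real q * real q / real n + (\<Sum>i<s. e) + (\<Sum>i<s. e)"
  proof (intro add_mono pB0)
    have "measure_pmf.prob P (\<Union>i<s. B1 i) \<le> (\<Sum>i<s. measure_pmf.prob P (B1 i))"
      by (rule measure_pmf.finite_measure_subadditive_finite) auto
    also have "\<dots> \<le> (\<Sum>i<s. e)" by (intro sum_mono pB1) auto
    finally show "measure_pmf.prob P (\<Union>i<s. B1 i) \<le> (\<Sum>i<s. e)" .
    have "measure_pmf.prob P (\<Union>i<s. B2 i) \<le> (\<Sum>i<s. measure_pmf.prob P (B2 i))"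
      by (rule measure_pmf.finite_measure_subadditive_finite) auto
    also have "\<dots> \<le> (\<Sum>i<s. e)" by (intro sum_mono pB2) auto
    finally show "measure_pmf.prob P (\<Union>i<s. B2 i) \<le> (\<Sum>i<s. e)" .
  qed
  finally have pBad: "measure_pmf.prob P Bad \<le> real q * real q / real n + 2 * (real s * e)" by (simp add: mult.commute)
  have qn: "real q * real q / real n \<le> \<epsilon> / (6 * (real s + 1))"
  proof -
    have "6 * real q ^ 2 * (real s + 1) \<le> real n * \<epsilon>"
      using assms(5) assms(1) by (simp add: divide_le_eq)
    then have h: "real q * real q * (6 * (real s + 1)) \<le> \<epsilon> * real n"
      by (simp add: power2_eq_square algebra_simps)
    have p: "0 < real n" "0 < 6 * (real s + 1)" using npos by auto
    show ?thesis using h p by (simp add: divide_le_eq le_divide_eq mult.commute)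
  qed
  have "real s * e + (real q * real q / real n + 2 * (real s * e)) \<le> 3 * (real s * e) + \<epsilon> / (6 * (real s + 1))"
    using qn by simp
  also have "3 * (real s * e) + \<epsilon> / (6 * (real s + 1)) \<le> \<epsilon>"
  proof -
    have pos: "0 < real s + 1" by simp
    have "3 * (real s * e) + \<epsilon> / (6 * (real s + 1)) = (6 * real s + 1) * \<epsilon> / (6 * (real s + 1))"
    proof -
      define t where "t = real s + 1"
      have t: "t \<noteq> 0" "real s = t - 1" unfolding t_def by auto
      show ?thesis unfolding e_def t_def[symmetric] t(2) using t(1)
        by (simp add: field_simps)
    qed
    also have "\<dots> \<le> (6 * (real s + 1)) * \<epsilon> / (6 * (real s + 1))"
      using assms(1) pos by (intro divide_right_mono mult_right_mono) auto
    also have "\<dots> = \<epsilon>" using pos by simp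
    finally show ?thesis .
  qed
  finally show ?thesis using main pBad by linarith
qed

end
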